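(* Let $\mathcal{H}$ be a $[3]$-graph, let $\mathcal{C}=v_1,e_1,\dots,v_\ell,e_\ell,v_1$ be a maximal Berge cycle in $\mathcal{H}$, let $u\in V(\mathcal{H})\setminus V(\mathcal{C})$, and let $U_u$ be a usable set for $u$. If $v_i,v_j\in U_u$ are distinct and adjacent, then $E(v_i,v_j)\subseteq\{e_i,e_j\}$.
   Context: A $[3]$-graph is a hypergraph in which every edge has at most $3$ vertices. A Berge cycle $\mathcal{C}=v_1,e_1,\dots,v_\ell,e_\ell,v_1$ consists of distinct edges $e_1,\dots,e_\ell$ and distinct vertices $v_1,\dots,v_\ell$ with $\{v_i,v_{i+1}\}\subseteq e_i$ (indices modulo $\ell$); $V(\mathcal{C})=\{v_1,\dots,v_\ell\}$. A Berge cycle $\mathcal{C}$ is maximal if there is no Berge cycle $\mathcal{C}'$ with $V(\mathcal{C})\subsetneq V(\mathcal{C}')$. For vertices $x,y$, $E(x,y)$ is the set of edges containing both; $x,y$ are adjacent if $E(x,y)\ne\emptyset$. A set $U_u\subseteq V(\mathcal{C})$ is usable for $u\notin V(\mathcal{C})$ if: (1) for every $v_i\in U_u$, $E(u,v_{i-1})\setminus\{e_{i-2}\}\neq\emptyset$; (2) for any distinct $v_i,v_j\in U_u$, $v_i$ and $v_j$ are not consecutive on $\mathcal{C}$; (3) for any distinct $v_i,v_j\in U_u$ there exist edges $e(u,v_{i-1})\in E(u,v_{i-1})\setminus\{e_{i-2}\}$ and $e(u,v_{j-1})\in E(u,v_{j-1})\setminus\{e_{j-2}\}$ with $e(u,v_{i-1})\neq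 e(u,v_{j-1})$. *)

theory Defs
  imports Main
begin

definition three_graph :: "'a set \<Rightarrow> 'a set set \<Rightarrow> bool" where
  "three_graph V E \<longleftrightarrow> (\<forall>e\<in>E. e \<subseteq> V \<and> finite e \<and> card e \<le> 3)"

definition edges_of :: "'a set set \<Rightarrow> 'a \<Rightarrow> 'a \<Rightarrow> 'a set set" where
  "edges_of E x y = {e \<in> E. x \<in> e \<and> y \<in> e}"

definition adjacent :: "'a set set \<Rightarrow> 'a \<Rightarrow> 'a \<Rightarrow> bool" where
  "adjacent E x y \<longleftrightarrow> edges_of E x y \<noteq> {}"

(* Berge cycle v_0,e_0,...,v_{l-1},e_{l-1},v_0 (0-based indices, modulo l);
   vs = vertex list, es = edge list. *)
definition berge_cycle :: "'a set \<Rightarrow> 'a set set \<Rightarrow> 'a list \<Rightarrow> 'a set list \<Rightarrow> bool" where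
  "berge_cycle V E vs es \<longleftrightarrow>
     length vs = length es \<and> length vs \<ge> 2 \<and> distinct vs \<and> distinct es \<and>
     set vs \<subseteq> V \<and> set es \<subseteq> E \<and>
     (\<forall>i < length vs. {vs ! i, vs ! ((i + 1) mod length vs)} \<subseteq> es ! i)"

definition maximal_berge_cycle :: "'a set \<Rightarrow> 'a set set \<Rightarrow> 'a list \<Rightarrow> 'a set list \<Rightarrow> bool" where
  "maximal_berge_cycle V E vs es \<longleftrightarrow> berge_cycle V E vs es \<and>
     \<not> (\<exists>vs' es'. berge_cycle V E vs' es' \<and> set vs \<subset> set vs')"

definition cprev :: "nat \<Rightarrow> nat \<Rightarrow> nat" where
  "cprev l i = (i + l - 1) mod l"

definition cprev2 :: "nat \<Rightarrow> nat \<Rightarrow> nat" where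
  "cprev2 l i = (i + 2 * l - 2) mod l"

definition usable :: "'a set set \<Rightarrow> 'a list \<Rightarrow> 'a set list \<Rightarrow> 'a \<Rightarrow> 'a set \<Rightarrow> bool" where
  "usable E vs es u U \<longleftrightarrow>
     (let l = length vs in
      U \<subseteq> set vs \<and>
      (\<forall>i < l. vs ! i \<in> U \<longrightarrow>
          edges_of E u (vs ! cprev l i) - {es ! cprev2 l i} \<noteq> {}) \<and>
      (\<forall>i < l. \<forall>j < l. vs ! i \<in> U \<and> vs ! j \<in> U \<and> i \<noteq> j \<longrightarrow>
          j \<noteq> (i + 1) mod l \<and> i \<noteq> (j + 1) mod l) \<and>
      (\<forall>i < l. \<forall>j < l. vs ! i \<in> U \<and> vs ! j \<in> U \<and> i \<noteq> j \<longrightarrow>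
          (\<exists>a \<in> edges_of E u (vs ! cprev l i) - {es ! cprev2 l i}.
           \<exists>b \<in> edges_of E u (vs ! cprev l j) - {es ! cprev2 l j}. a \<noteq> b)))"

end

theory Submission
  imports Defs
begin

lemma four_in:
  assumes "finite e" "card e \<le> 3" "x\<in>e" "y\<in>e" "z\<in>e" "t\<in>e"
    "x\<noteq>y" "x\<noteq>z" "x\<noteq>t" "y\<noteq>z" "y\<noteq>t" "z\<noteq>t"
  shows False
proof -
  have "card {x,y,z,t} = 4" using assms by simp
  moreover have "card {x,y,z,t} \<le> card e" using assms by (intro card_mono) auto
  ultimately show False using assms by simp
qed

lemma core:
  fixes vr :: "nat \<Rightarrow> 'a" and er :: "nat \<Rightarrow> 'a set"
  assumes d: "2 \<le> d" "d + 2 \<le> l"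
    and vinj: "inj_on vr {..<l}" and einj: "inj_on er {..<l}"
    and u: "u \<notin> vr ` {..<l}"
    and adj: "\<And>k. k+1<l \<Longrightarrow> vr k \<in> er k \<and> vr (k+1) \<in> er k"
    and a: "u \<in> A" "vr (l-1) \<in> A" "A \<noteq> er (l-2)"
    and b: "u \<in> B" "vr (d-1) \<in> B" "B \<noteq> er (d-2)"
    and ab: "A \<noteq> B"
    and f: "vr 0 \<in> F" "vr d \<in> F" "F \<noteq> er 0" "F \<noteq> er d"
    and small: "\<And>e. e \<in> {A,B,F} \<union> er ` {..<l} \<Longrightarrow> finite e \<and> card e \<le> 3"
  defines "w \<equiv> \<lambda>m. if m = 0 then u else if m \<le> l-d then vr (l-m) else vr (m-(l-d+1))"
    and "h \<equiv> \<lambda>m. if m < l-d then l-m-1 else m-(l-d+1)"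
    and "g \<equiv> \<lambda>m. if m = 0 then A else if m < l-d then er (l-m-1) else if m = l-d then F
                 else if m < l then er (m-(l-d+1)) else B"
  shows "inj_on w {..<l+1}" "inj_on g {..<l+1}"
    "\<And>m. m < l+1 \<Longrightarrow> w m \<in> g m \<and> w ((m+1) mod (l+1)) \<in> g m"
    "w ` {..<l+1} = insert u (vr ` {..<l})"
    "g ` {..<l+1} \<subseteq> insert A (insert B (insert F (er ` {..<l})))"
proof -
  have vne: "vr p \<noteq> vr q" if "p < l" "q < l" "p \<noteq> q" for p q
    using vinj that by (meson inj_on_eq_iff lessThan_iff)
  have une: "u \<noteq> vr p" if "p < l" for p using u that by auto
  have ene: "er p \<noteq> er q" if "p < l" "q < l" "p \<noteq> q" for p q
    using einj that by (meson inj_on_eq_iff lessThan_iff)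
  have sm: "finite (er p) \<and> card (er p) \<le> 3" if "p < l" for p using small that by auto
  have smA: "finite A" "card A \<le> 3" "finite B" "card B \<le> 3" "finite F" "card F \<le> 3"
    using small by auto
  have Ane: "A \<noteq> er k" if "k + 1 < l" for k
  proof
    assume eq: "A = er k"
    show False
    proof (cases "k = l-2")
      case True then show ?thesis using eq a by simp
    next
      case False
      have "vr (l-1) \<noteq> vr k" "vr (l-1) \<noteq> vr (k+1)" "vr k \<noteq> vr (k+1)"
        using vne that False d by auto
      moreover have "u \<noteq> vr (l-1)" "u \<noteq> vr k" "u \<noteq> vr (k+1)" using une that d by auto
      ultimately show ?thesis
        using four_in[of A u "vr (l-1)" "vr k" "vr (k+1)"] adj[OF that] smA a eq by blast
    qed
  qed
  have Bne: "B \<noteq> er k" if "k + 1 < l" "k \<noteq> d - 1" for k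
  proof
    assume eq: "B = er k"
    show False
    proof (cases "k = d-2")
      case True then show ?thesis using eq b by simp
    next
      case False
      have "vr (d-1) \<noteq> vr k" "vr (d-1) \<noteq> vr (k+1)" "vr k \<noteq> vr (k+1)"
        using vne that False d by auto
      moreover have "u \<noteq> vr (d-1)" "u \<noteq> vr k" "u \<noteq> vr (k+1)" using une that d by auto
      ultimately show ?thesis
        using four_in[of B u "vr (d-1)" "vr k" "vr (k+1)"] adj[OF that(1)] smA b eq by blast
    qed
  qed
  have Fne: "F \<noteq> er k" if "k + 1 < l" "k \<noteq> d - 1" for k
  proof
    assume eq: "F = er k"
    show False
    proof (cases "k = 0 \<or> k = d")
      case True then show ?thesis using eq f by auto
    next
      case False
      have "vr 0 \<noteq> vr d" "vr 0 \<noteq> vr k" "vr 0 \<noteq> vr (k+1)" "vr d \<noteq> vr k" "vr d \<noteq> vr (k+1)" "vr k \<noteq> vr (k+1)"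
        using vne that False d by auto
      then show ?thesis
        using four_in[of F "vr 0" "vr d" "vr k" "vr (k+1)"] adj[OF that(1)] smA f eq by blast
    qed
  qed
  have AF: "A \<noteq> F"
  proof
    assume eq: "A = F"
    have "vr (l-1) \<noteq> vr 0" "vr (l-1) \<noteq> vr d" "vr 0 \<noteq> vr d" using vne d by auto
    moreover have "u \<noteq> vr (l-1)" "u \<noteq> vr 0" "u \<noteq> vr d" using une d by auto
    ultimately show False using four_in[of A u "vr (l-1)" "vr 0" "vr d"] smA a f eq by blast
  qed
  have BF: "B \<noteq> F"
  proof
    assume eq: "B = F"
    have "vr (d-1) \<noteq> vr 0" "vr (d-1) \<noteq> vr d" "vr 0 \<noteq> vr d" using vne d by auto
    moreover have "u \<noteq> vr (d-1)" "u \<noteq> vr 0" "u \<noteq> vr d" using une d by auto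
    ultimately show False using four_in[of B u "vr (d-1)" "vr 0" "vr d"] smA b f eq by blast
  qed
  define p where "p \<equiv> \<lambda>m::nat. if m \<le> l-d then l-m else m-(l-d+1)"
  have wp: "w m = vr (p m)" if "m \<noteq> 0" for m using that unfolding w_def p_def by auto
  have pl: "p m < l" if "m \<noteq> 0" "m < l+1" for m using that d unfolding p_def by auto
  have pinj: "p m = p m' \<Longrightarrow> m = m'" if "m \<noteq> 0" "m < l+1" "m' \<noteq> 0" "m' < l+1" for m m'
    using that d unfolding p_def by (auto split: if_splits)
  show "inj_on w {..<l+1}"
  proof (rule inj_onI)
    fix m m' assume m: "m \<in> {..<l+1}" "m' \<in> {..<l+1}" and eq: "w m = w m'"
    show "m = m'"
    proof (cases "m = 0")
      case True
      then show ?thesis using eq m une pl wp unfolding w_def by (metis lessThan_iff)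
    next
      case False
      show ?thesis
      proof (cases "m' = 0")
        case True
        then show ?thesis using eq m une pl wp False unfolding w_def by (metis lessThan_iff)
      next
        case F2: False
        then show ?thesis using False eq m vne pl wp pinj by (metis lessThan_iff)
      qed
    qed
  qed
  define q where "q \<equiv> \<lambda>m::nat. if m < l-d then l-m-1 else m-(l-d+1)"
  have gq: "g m = er (q m)" if "m \<noteq> 0" "m \<noteq> l-d" "m < l" for m
    using that unfolding g_def q_def by auto
  have ql: "q m + 1 < l" "q m \<noteq> d - 1" if "m \<noteq> 0" "m \<noteq> l-d" "m < l" for m
    using that d unfolding q_def by auto
  have qinj: "q m = q m' \<Longrightarrow> m = m'" if "m \<noteq> 0" "m \<noteq> l-d" "m < l" "m' \<noteq> 0" "m' \<noteq> l-d" "m' < l" for m m'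
    using that d unfolding q_def by (auto split: if_splits)
  have gA: "g 0 = A" and gF: "g (l-d) = F" and gB: "g l = B" using d unfolding g_def by auto
  have gcase: "m = 0 \<or> m = l-d \<or> m = l \<or> (m \<noteq> 0 \<and> m \<noteq> l-d \<and> m < l)" if "m < l+1" for m
    using that by auto
  show "inj_on g {..<l+1}"
  proof (rule inj_onI)
    fix m m' assume m: "m \<in> {..<l+1}" "m' \<in> {..<l+1}" and eq: "g m = g m'"
    have l0: "l - d \<noteq> 0" "l - d \<noteq> l" "l \<noteq> 0" using d by auto
    have c1: "m = 0 \<or> m = l-d \<or> m = l \<or> (m \<noteq> 0 \<and> m \<noteq> l-d \<and> m < l)" using gcase m by auto
    have c2: "m' = 0 \<or> m' = l-d \<or> m' = l \<or> (m' \<noteq> 0 \<and> m' \<noteq> l-d \<and> m' < l)" using gcase m by auto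
    have midA: "g k \<noteq> A" "g k \<noteq> B" "g k \<noteq> F" "A \<noteq> g k" "B \<noteq> g k" "F \<noteq> g k" if "k \<noteq> 0 \<and> k \<noteq> l-d \<and> k < l" for k
    proof -
      have "g k = er (q k)" "q k + 1 < l" "q k \<noteq> d - 1" using that gq ql by blast+
      then show "g k \<noteq> A" "g k \<noteq> B" "g k \<noteq> F" "A \<noteq> g k" "B \<noteq> g k" "F \<noteq> g k" using Ane Bne Fne by metis+
    qed
    have midmid: "k = k'" if "k \<noteq> 0 \<and> k \<noteq> l-d \<and> k < l" "k' \<noteq> 0 \<and> k' \<noteq> l-d \<and> k' < l" "g k = g k'" for k k'
    proof -
      have "q k + 1 < l" using ql(1)[of k] that(1) by blast
      moreover have "q k' + 1 < l" using ql(1)[of k'] that(2) by blast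
      moreover have "er (q k) = er (q k')" using that gq by metis
      ultimately have "q k < l" "q k' < l" by linarith+
      moreover have "er (q k) = er (q k')" using that gq by metis
      ultimately have "q k = q k'" using ene by blast
      then show ?thesis using qinj that by blast
    qed
    from c1 c2 show "m = m'"
      using eq
      apply (elim disjE)
      apply (simp_all add: gA gF gB AF BF AF[symmetric] BF[symmetric] ab ab[symmetric] l0 l0[symmetric] midA)
      using midmid by blast
  qed
  show "w m \<in> g m \<and> w ((m+1) mod (l+1)) \<in> g m" if ml: "m < l+1" for m
  proof -
    consider "m = 0" | "m \<noteq> 0" "m < l-d" | "m = l-d" | "l-d < m" "m < l" | "m = l"
      using ml d by linarith
    then show ?thesis
    proof cases
      case 1 then show ?thesis using a d unfolding w_def g_def by auto
    next
      case 2
      have "l-m-1 + 1 < l" using 2 d by auto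
      from adj[OF this] have "vr (l-m-1) \<in> er (l-m-1)" "vr (l-m-1+1) \<in> er (l-m-1)" by auto
      moreover have "l-m-1+1 = l-m" "l - (m+1) = l-m-1" using 2 d by auto
      ultimately show ?thesis using 2 d ml unfolding w_def g_def by auto
    next
      case 3 then show ?thesis using f d unfolding w_def g_def by auto
    next
      case 4
      have "m-(l-d+1) + 1 < l" using 4 d by auto
      from adj[OF this] have "vr (m-(l-d+1)) \<in> er (m-(l-d+1))" "vr (m-(l-d+1)+1) \<in> er (m-(l-d+1))" by auto
      moreover have "m+1-(l-d+1) = m-(l-d+1)+1" using 4 d by auto
      ultimately show ?thesis using 4 d ml unfolding w_def g_def by auto
    next
      case 5
      have "l - (l-d+1) = d - 1" using d by auto
      then show ?thesis using 5 b d unfolding w_def g_def by auto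
    qed
  qed
  show "w ` {..<l+1} = insert u (vr ` {..<l})"
  proof
    show "w ` {..<l+1} \<subseteq> insert u (vr ` {..<l})"
    proof
      fix x assume "x \<in> w ` {..<l+1}"
      then obtain m where m: "m < l+1" "x = w m" by auto
      show "x \<in> insert u (vr ` {..<l})"
      proof (cases "m = 0")
        case True then show ?thesis using m unfolding w_def by auto
      next
        case False then show ?thesis using m wp pl by auto
      qed
    qed
    show "insert u (vr ` {..<l}) \<subseteq> w ` {..<l+1}"
    proof
      fix x assume "x \<in> insert u (vr ` {..<l})"
      then consider "x = u" | k where "k < l" "x = vr k" by auto
      then show "x \<in> w ` {..<l+1}"
      proof cases
        case 1
        have "w 0 = u" unfolding w_def by simp
        then show ?thesis using 1 by force
      next
        case (2 k)
        show ?thesis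
        proof (cases "d \<le> k")
          case True
          have "w (l-k) = vr k" "l-k < l+1" using True 2 d unfolding w_def by auto
          then show ?thesis using 2 by force
        next
          case False
          have "w (k+l-d+1) = vr k" "k+l-d+1 < l+1" using False 2 d unfolding w_def by auto
          then show ?thesis using 2 by force
        qed
      qed
    qed
  qed
  show "g ` {..<l+1} \<subseteq> insert A (insert B (insert F (er ` {..<l})))"
    unfolding g_def by auto
qed

lemma rinv: "p < l \<Longrightarrow> i < l \<Longrightarrow> (i + (p + l - i) mod l) mod l = (p::nat)"
  by (metis add_diff_inverse_nat canonically_ordered_monoid_add_class.lessE
    mod_add_right_eq mod_add_self2 mod_if not_add_less2
    trans_less_add1)
lemma rinj_aux: "k < l \<Longrightarrow> k' < l \<Longrightarrow> k \<le> k' \<Longrightarrow> (i + k) mod l = (i + k') mod l \<Longrightarrow> (k::nat) = k'"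
proof -
  assume a: "k < l" "k' < l" "k \<le> k'" "(i + k) mod l = (i + k') mod l"
  then have "l dvd (i + k') - (i + k)" using mod_eq_dvd_iff_nat[of "i+k" "i+k'" l] by simp
  then have "l dvd k' - k" by simp
  moreover have "k' - k < l" using a by linarith
  ultimately have "k' - k = 0" using dvd_imp_le by fastforce
  then show ?thesis using a by simp
qed
lemma rinj: "k < l \<Longrightarrow> k' < l \<Longrightarrow> (i + k) mod l = (i + k') mod l \<Longrightarrow> (k::nat) = k'"
  by (metis nat_le_linear rinj_aux)
lemma rsuc: "((i + k) mod l + 1) mod l = (i + (k+1)) mod (l::nat)"
  by presburger
lemma rshift: "0 < l \<Longrightarrow> (((i + k) mod l) + l - 1) mod l = (i + (k + l - 1)) mod (l::nat)"
proof -
  assume "0 < l"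
  then have "(i+k) mod l + l - 1 = (i+k) mod l + (l-1)" "i + (k + l - 1) = (i+k) + (l-1)" by auto
  then show ?thesis by (simp add: mod_add_left_eq add.assoc)
qed
lemma rshift2: "0 < l \<Longrightarrow> (((i + k) mod l) + 2*l - 2) mod l = (i + (k + 2*l - 2)) mod (l::nat)"
proof -
  assume "0 < l"
  then have "(i+k) mod l + 2*l - 2 = (i+k) mod l + (2*l-2)" "i + (k + 2*l - 2) = (i+k) + (2*l-2)" by auto
  then show ?thesis by (simp add: mod_add_left_eq add.assoc)
qed

theorem claim2p4:
  fixes V :: "'a set" and E :: "'a set set" and vs :: "'a list" and es :: "'a set list"
    and u :: 'a and U :: "'a set" and i j :: nat
  assumes "three_graph V E"
    and "maximal_berge_cycle V E vs es"
    and "u \<in> V" and "u \<notin> set vs"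
    and "usable E vs es u U"
    and "i < length vs" and "j < length vs" and "i \<noteq> j"
    and "vs ! i \<in> U" and "vs ! j \<in> U"
    and "adjacent E (vs ! i) (vs ! j)"
  shows "edges_of E (vs ! i) (vs ! j) \<subseteq> {es ! i, es ! j}"
proof (rule ccontr)
  assume "\<not> ?thesis"
  then obtain F where F: "F \<in> E" "vs ! i \<in> F" "vs ! j \<in> F" "F \<noteq> es ! i" "F \<noteq> es ! j"
    unfolding edges_of_def by auto
  define l where "l = length vs"
  have bc: "berge_cycle V E vs es" and nomax: "\<not> (\<exists>vs' es'. berge_cycle V E vs' es' \<and> set vs \<subset> set vs')"
    using assms(2) unfolding maximal_berge_cycle_def by auto
  have lens: "length es = l" "2 \<le> l" and dvs: "distinct vs" and des: "distinct es"
    and sV: "set vs \<subseteq> V" and sE: "set es \<subseteq> E"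
    and cyc: "\<And>k. k < l \<Longrightarrow> vs ! k \<in> es ! k \<and> vs ! ((k+1) mod l) \<in> es ! k"
    using bc unfolding berge_cycle_def l_def by auto
  have il: "i < l" and jl: "j < l" using assms(6,7) l_def by auto
  have us: "j \<noteq> (i + 1) mod l" "i \<noteq> (j + 1) mod l"
    and ab: "\<exists>a \<in> edges_of E u (vs ! cprev l i) - {es ! cprev2 l i}.
           \<exists>b \<in> edges_of E u (vs ! cprev l j) - {es ! cprev2 l j}. a \<noteq> b"
    using assms(5,8,9,10) il jl unfolding usable_def Let_def l_def by blast+
  then obtain A B where A: "A \<in> E" "u \<in> A" "vs ! cprev l i \<in> A" "A \<noteq> es ! cprev2 l i"
    and B: "B \<in> E" "u \<in> B" "vs ! cprev l j \<in> B" "B \<noteq> es ! cprev2 l j" and AB: "A \<noteq> B"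
    unfolding edges_of_def by auto
  define r where "r = (\<lambda>k. (i + k) mod l)"
  define vr where "vr = (\<lambda>k. vs ! r k)"
  define er where "er = (\<lambda>k. es ! r k)"
  define d where "d = (j + l - i) mod l"
  have l0: "0 < l" using lens by auto
  have rl: "r k < l" for k unfolding r_def using l0 by auto
  have rd: "r d = j" unfolding r_def d_def using rinv[OF jl il] .
  have r0: "r 0 = i" unfolding r_def using il by simp
  have dl: "d < l" unfolding d_def using l0 by auto
  have d0: "d \<noteq> 0" using rd r0 assms(8) by metis
  have d1: "d \<noteq> 1" using rd us(1) unfolding r_def by auto
  have d2: "d \<noteq> l - 1"
  proof
    assume "d = l - 1"
    then have "(j + 1) mod l = (i + (l - 1 + 1)) mod l" using rd rsuc[of i "l-1" l] unfolding r_def by simp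
    also have "\<dots> = i" using l0 il by simp
    finally show False using us(2) by simp
  qed
  have dd: "2 \<le> d" "d + 2 \<le> l" using d0 d1 d2 dl by auto
  have rinj': "k = k'" if "k < l" "k' < l" "r k = r k'" for k k'
    using rinj that unfolding r_def by blast
  have vinj: "inj_on vr {..<l}"
  proof (rule inj_onI)
    fix k k' assume "k \<in> {..<l}" "k' \<in> {..<l}" "vr k = vr k'"
    then show "k = k'" using dvs rl rinj' unfolding vr_def l_def
      by (metis lessThan_iff nth_eq_iff_index_eq)
  qed
  have einj: "inj_on er {..<l}"
  proof (rule inj_onI)
    fix k k' assume "k \<in> {..<l}" "k' \<in> {..<l}" "er k = er k'"
    then show "k = k'" using des rl rinj' lens unfolding er_def
      by (metis lessThan_iff nth_eq_iff_index_eq)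
  qed
  have vset: "vr ` {..<l} = set vs"
  proof
    show "vr ` {..<l} \<subseteq> set vs" using rl unfolding vr_def l_def by auto
    show "set vs \<subseteq> vr ` {..<l}"
    proof
      fix x assume "x \<in> set vs"
      then obtain p where p: "p < l" "x = vs ! p" unfolding l_def by (metis in_set_conv_nth)
      have "r ((p + l - i) mod l) = p" unfolding r_def using rinv[OF p(1) il] .
      moreover have "(p + l - i) mod l < l" using l0 by auto
      ultimately show "x \<in> vr ` {..<l}" using p unfolding vr_def by (metis image_eqI lessThan_iff)
    qed
  qed
  have eset: "er ` {..<l} \<subseteq> E" using rl sE lens unfolding er_def by (metis image_subsetI nth_mem subsetD)
  have u': "u \<notin> vr ` {..<l}" using vset assms(4) by simp
  have adj: "vr k \<in> er k \<and> vr (k+1) \<in> er k" if "k+1 < l" for k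
    using cyc[OF rl[of k]] rsuc[of i k l] unfolding vr_def er_def r_def by simp
  have ci: "cprev l i = r (l-1)" unfolding cprev_def r_def using l0 by (simp add: add.commute)
  have c2i: "cprev2 l i = r (l-2)"
  proof -
    have "i + 2*l - 2 = (i + (l - 2)) + l" using dd by auto
    then show ?thesis unfolding cprev2_def r_def by simp
  qed
  have cj: "cprev l j = r (d-1)"
  proof -
    have "cprev l j = (i + (d + l - 1)) mod l" unfolding cprev_def using rd rshift[OF l0, of i d] unfolding r_def by simp
    also have "d + l - 1 = (d - 1) + l" using dd by auto
    finally show ?thesis unfolding r_def by (simp add: add.assoc[symmetric])
  qed
  have c2j: "cprev2 l j = r (d-2)"
  proof -
    have "cprev2 l j = (i + (d + 2*l - 2)) mod l" unfolding cprev2_def using rd rshift2[OF l0, of i d] unfolding r_def by simp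
    also have "d + 2*l - 2 = (d - 2) + l + l" using dd by auto
    finally show ?thesis unfolding r_def by (simp add: add.assoc[symmetric])
  qed
  have small: "finite e \<and> card e \<le> 3" if "e \<in> {A,B,F} \<union> er ` {..<l}" for e
    using that assms(1) A B F eset unfolding three_graph_def by blast
  have fv: "vr 0 \<in> F" "vr d \<in> F" "F \<noteq> er 0" "F \<noteq> er d"
    using F r0 rd unfolding vr_def er_def by auto
  have Av: "vr (l-1) \<in> A" "A \<noteq> er (l-2)" using A ci c2i unfolding vr_def er_def by auto
  have Bv: "vr (d-1) \<in> B" "B \<noteq> er (d-2)" using B cj c2j unfolding vr_def er_def by auto
  have adj': "\<And>k. k+1<l \<Longrightarrow> vr k \<in> er k \<and> vr (k+1) \<in> er k" using adj by blast
  have small': "\<And>e. e \<in> {A,B,F} \<union> er ` {..<l} \<Longrightarrow> finite e \<and> card e \<le> 3" using small by blast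
  note C = core[OF dd vinj einj u' adj' A(2) Av B(2) Bv AB fv small']
  define w where "w \<equiv> \<lambda>m. if m = 0 then u else if m \<le> l-d then vr (l-m) else vr (m-(l-d+1))"
  define g where "g \<equiv> \<lambda>m. if m = 0 then A else if m < l-d then er (l-m-1) else if m = l-d then F
                 else if m < l then er (m-(l-d+1)) else B"
  have winj: "inj_on w {..<l+1}" unfolding w_def by (rule C(1))
  have ginj: "inj_on g {..<l+1}" unfolding g_def by (rule C(2))
  have wg: "w m \<in> g m \<and> w ((m+1) mod (l+1)) \<in> g m" if "m < l+1" for m
    unfolding w_def g_def by (rule C(3)) (insert that, simp_all)
  have wim: "w ` {..<l+1} = insert u (set vs)"
  proof -
    have "w ` {..<l+1} = insert u (vr ` {..<l})" unfolding w_def by (rule C(4))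
    then show ?thesis using vset by simp
  qed
  have gim: "g ` {..<l+1} \<subseteq> E"
  proof -
    have "g ` {..<l+1} \<subseteq> insert A (insert B (insert F (er ` {..<l})))" unfolding g_def by (rule C(5))
    then show ?thesis using A(1) B(1) F(1) eset by blast
  qed
  define ws where "ws = map w [0..<l+1]"
  define gs where "gs = map g [0..<l+1]"
  have set_ws: "set ws = insert u (set vs)" unfolding ws_def set_map set_upt atLeast0LessThan by (rule wim)
  have "berge_cycle V E ws gs"
    unfolding berge_cycle_def
  proof (intro conjI allI impI)
    show "length ws = length gs" unfolding ws_def gs_def by simp
    show "2 \<le> length ws" unfolding ws_def using lens by simp
    show "distinct ws" unfolding ws_def distinct_map set_upt atLeast0LessThan using winj by simp
    show "distinct gs" unfolding gs_def distinct_map set_upt atLeast0LessThan using ginj by simp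
    show "set ws \<subseteq> V" using set_ws sV assms(3) by simp
    show "set gs \<subseteq> E" unfolding gs_def set_map set_upt atLeast0LessThan by (rule gim)
    fix m assume "m < length ws"
    then have m: "m < l+1" unfolding ws_def by simp
    have "(m+1) mod (l+1) < l+1" by simp
    then show "{ws ! m, ws ! ((m + 1) mod length ws)} \<subseteq> gs ! m"
      using wg[OF m] m unfolding ws_def gs_def by (simp del: upt_Suc)
  qed
  moreover have "set vs \<subset> set ws" using set_ws assms(4) by auto
  ultimately show False using nomax by blast
qed

end
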